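(* For every integer $i\ge1$ there exist $R_i^0,\dots,R_i^{i-1}\in\mathrm{End}(\mathbb{R}^n)[X_0,\dots,X_{i-1}]$ such that \[ Q_i^{i+k}=\sum_{j=0}^{i-1}k^jR_i^j\qquad\text{for all integers }k\ge0 \] (with the convention $0^0=1$). Furthermore, $R_i^{i-1}=\dfrac{BP_{i-1}}{(i-1)!}$.
   Context: Let $n\ge1$ and $A,B\in\mathrm{End}(\mathbb{R}^n)$. $\mathrm{End}(\mathbb{R}^n)[X_0,\dots,X_{k-1}]$ denotes polynomials in commuting scalar indeterminates $X_0,\dots,X_{k-1}$ with coefficients in $\mathrm{End}(\mathbb{R}^n)$ (for $k=0$, just $\mathrm{End}(\mathbb{R}^n)$), and $\mathrm{End}(\mathbb{R}^n)[(X_k)_{k\in\mathbb{N}}]$ is the union of these. Define the linear map $\Psi$ on $\mathrm{End}(\mathbb{R}^n)[(X_k)_{k\in\mathbb{N}}]$ by $\Psi(P)(X_0,\dots,X_k)=P(X_0,\dots,X_{k-1})(A+X_0B)+\sum_{i=0}^{k-1}\frac{\partial P}{\partial X_i}(X_0,\dots,X_{k-1})X_{i+1}$, where $k=\min\{\ell\in\mathbb{N}:P\in\mathrm{End}(\mathbb{R}^n)[X_0,\dots,X_{\ell-1}]\}$. Define $P_0=I$ (identity) and $P_{k+1}=\Psi(P_k)$ for $k\in\mathbb{N}$, so $P_k\in\mathrm{End}(\mathbb{R}^n)[X_0,\dots,X_{k-1}]$. For integers $1\le i\le k$ let $Q_i^k=\partial P_k/\partial X_{k-i}$. *)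

theory Defs
  imports "HOL-Analysis.Analysis" "HOL-Library.Poly_Mapping"
begin

text \<open>Polynomials in commuting scalar indeterminates X_0, X_1, ... with coefficients
in End(R^n) = real^'n^'n (matrix product is the operator **).\<close>

type_synonym monom = "nat \<Rightarrow>\<^sub>0 nat"
type_synonym 'n epoly = "monom \<Rightarrow>\<^sub>0 ((real, 'n) vec, 'n) vec"

definition in_vars :: "nat \<Rightarrow> 'n::finite epoly \<Rightarrow> bool" where
  "in_vars l P \<longleftrightarrow> (\<forall>m\<in>Poly_Mapping.keys P. \<forall>j\<in>Poly_Mapping.keys m. j < l)"

definition nvars :: "'n::finite epoly \<Rightarrow> nat" where
  "nvars P = (LEAST l. in_vars l P)"

definition rmul :: "'n::finite epoly \<Rightarrow> real^'n^'n \<Rightarrow> 'n epoly" where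
  "rmul P M = (\<Sum>m\<in>Poly_Mapping.keys P. Poly_Mapping.single m (Poly_Mapping.lookup P m ** M))"

definition lmul :: "real^'n^'n \<Rightarrow> 'n::finite epoly \<Rightarrow> 'n epoly" where
  "lmul M P = (\<Sum>m\<in>Poly_Mapping.keys P. Poly_Mapping.single m (M ** Poly_Mapping.lookup P m))"

definition smul :: "real \<Rightarrow> 'n::finite epoly \<Rightarrow> 'n epoly" where
  "smul c P = (\<Sum>m\<in>Poly_Mapping.keys P. Poly_Mapping.single m (c *\<^sub>R Poly_Mapping.lookup P m))"

definition xmul :: "nat \<Rightarrow> 'n::finite epoly \<Rightarrow> 'n epoly" where
  "xmul j P = (\<Sum>m\<in>Poly_Mapping.keys P. Poly_Mapping.single (m + Poly_Mapping.single j 1) (Poly_Mapping.lookup P m))"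

definition pdiff :: "nat \<Rightarrow> 'n::finite epoly \<Rightarrow> 'n epoly" where
  "pdiff i P = (\<Sum>m\<in>Poly_Mapping.keys P.
      Poly_Mapping.single (m - Poly_Mapping.single i 1) (real (Poly_Mapping.lookup m i) *\<^sub>R Poly_Mapping.lookup P m))"

definition one_poly :: "'n::finite epoly" where
  "one_poly = Poly_Mapping.single 0 (mat 1)"

definition Psi :: "real^'n^'n \<Rightarrow> real^'n^'n \<Rightarrow> 'n::finite epoly \<Rightarrow> 'n epoly" where
  "Psi A B P = rmul P A + xmul 0 (rmul P B) + (\<Sum>i<nvars P. xmul (Suc i) (pdiff i P))"

definition Pk :: "real^'n^'n \<Rightarrow> real^'n^'n \<Rightarrow> nat \<Rightarrow> 'n::finite epoly" where
  "Pk A B k = (Psi A B ^^ k) one_poly"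

text \<open>Q_i^k = dP_k / dX_{k-i}  (meaningful for 1 \<le> i \<le> k)\<close>
definition Qik :: "real^'n^'n \<Rightarrow> real^'n^'n \<Rightarrow> nat \<Rightarrow> nat \<Rightarrow> 'n::finite epoly" where
  "Qik A B i k = pdiff (k - i) (Pk A B k)"

end

theory Submission imports Defs begin

abbreviation lk where "lk \<equiv> Poly_Mapping.lookup"

lemma lk_sum_single: "lk (\<Sum>m\<in>S. Poly_Mapping.single (f m) (g m)) x = (\<Sum>m\<in>S. if f m = x then g m else 0)"
  by (simp add: lookup_sum lookup_single when_def)

lemma lk_smul[simp]: "lk (smul c P) x = c *\<^sub>R lk P x"
proof -
  have "lk (smul c P) x = (\<Sum>m\<in>Poly_Mapping.keys P. if m = x then c *\<^sub>R lk P m else 0)"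
    unfolding smul_def lk_sum_single by simp
  also have "\<dots> = c *\<^sub>R lk P x"
    by (simp add: sum.delta in_keys_iff)
  finally show ?thesis .
qed

lemma lk_rmul[simp]: "lk (rmul P M) x = lk P x ** M"
proof -
  have "lk (rmul P M) x = (\<Sum>m\<in>Poly_Mapping.keys P. if m = x then lk P m ** M else 0)"
    unfolding rmul_def lk_sum_single by simp
  also have "\<dots> = lk P x ** M"
    by (simp add: sum.delta in_keys_iff)
  finally show ?thesis .
qed

lemma lk_lmul[simp]: "lk (lmul M P) x = M ** lk P x"
proof -
  have "lk (lmul M P) x = (\<Sum>m\<in>Poly_Mapping.keys P. if m = x then M ** lk P m else 0)"
    unfolding lmul_def lk_sum_single by simp
  also have "\<dots> = M ** lk P x"
    by (simp add: sum.delta in_keys_iff)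
  finally show ?thesis .
qed

lemma lk_xmul: "lk (xmul j P) x = (if lk x j \<ge> 1 then lk P (x - Poly_Mapping.single j 1) else 0)"
proof -
  have "lk (xmul j P) x = (\<Sum>m\<in>Poly_Mapping.keys P. if m + Poly_Mapping.single j 1 = x then lk P m else 0)"
    unfolding xmul_def lk_sum_single by simp
  also have "\<dots> = (if lk x j \<ge> 1 then lk P (x - Poly_Mapping.single j 1) else 0)"
  proof (cases "lk x j \<ge> 1")
    case True
    have "\<And>m. (m + Poly_Mapping.single j 1 = x) = (m = x - Poly_Mapping.single j 1)"
      using True by (auto simp: poly_mapping_eq_iff fun_eq_iff lookup_add lookup_minus lookup_single when_def)
    then show ?thesis using True by (simp add: sum.delta in_keys_iff)
  next
    case False
    have "\<And>m. m + Poly_Mapping.single j 1 \<noteq> x"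
      using False by (auto simp: poly_mapping_eq_iff fun_eq_iff lookup_add lookup_single when_def)
    then show ?thesis using False by simp
  qed
  finally show ?thesis .
qed

lemma lk_pdiff: "lk (pdiff i P) x = real (lk x i + 1) *\<^sub>R lk P (x + Poly_Mapping.single i 1)"
proof -
  have "lk (pdiff i P) x = (\<Sum>m\<in>Poly_Mapping.keys P. if m - Poly_Mapping.single i 1 = x then real (lk m i) *\<^sub>R lk P m else 0)"
    unfolding pdiff_def lk_sum_single by simp
  also have "\<dots> = (\<Sum>m\<in>Poly_Mapping.keys P. if m = x + Poly_Mapping.single i 1 then real (lk m i) *\<^sub>R lk P m else 0)"
  proof (rule sum.cong[OF refl])
    fix m
    show "(if m - Poly_Mapping.single i 1 = x then real (lk m i) *\<^sub>R lk P m else 0) =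
          (if m = x + Poly_Mapping.single i 1 then real (lk m i) *\<^sub>R lk P m else 0)"
    proof (cases "lk m i = 0")
      case True
      then have "m \<noteq> x + Poly_Mapping.single i 1"
        by (auto simp: lookup_add lookup_single)
      then show ?thesis using True by simp
    next
      case False
      then have "(m - Poly_Mapping.single i 1 = x) = (m = x + Poly_Mapping.single i 1)"
        by (auto simp: poly_mapping_eq_iff fun_eq_iff lookup_add lookup_minus lookup_single when_def)
      then show ?thesis by simp
    qed
  qed
  also have "\<dots> = real (lk x i + 1) *\<^sub>R lk P (x + Poly_Mapping.single i 1)"
    by (simp add: sum.delta in_keys_iff lookup_add)
  finally show ?thesis .
qed

lemma lk_one: "lk one_poly x = (if x = 0 then mat 1 else 0)"
  by (simp add: one_poly_def lookup_single when_def)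


lemma mm_add_r: "(X + Y) ** (M::real^'n::finite^'n) = X ** M + Y ** M"
  by (simp add: matrix_matrix_mult_def vec_eq_iff sum.distrib algebra_simps)
lemma mm_scale_l: "(c *\<^sub>R X) ** (M::real^'n::finite^'n) = c *\<^sub>R (X ** M)"
  by (simp add: matrix_matrix_mult_def vec_eq_iff sum_distrib_left algebra_simps)
lemma mm_scale_r: "(M::real^'n::finite^'n) ** (c *\<^sub>R X) = c *\<^sub>R (M ** X)"
  by (simp add: matrix_matrix_mult_def vec_eq_iff sum_distrib_left algebra_simps)

lemma add_smul: "Modules.additive (smul c)"
  by unfold_locales (rule poly_mapping_eqI, simp add: lookup_add scaleR_add_right)
lemma add_pdiff: "Modules.additive (pdiff i)"
  by unfold_locales (rule poly_mapping_eqI, simp add: lk_pdiff lookup_add scaleR_add_right)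
lemma add_xmul: "Modules.additive (xmul i)"
  by unfold_locales (rule poly_mapping_eqI, simp add: lk_xmul lookup_add)
lemma add_rmul: "Modules.additive (\<lambda>P. rmul P M)"
  by unfold_locales (rule poly_mapping_eqI, simp add: lookup_add mm_add_r)
lemma add_lmul: "Modules.additive (lmul M)"
  by unfold_locales (rule poly_mapping_eqI, simp add: lookup_add matrix_add_ldistrib)

lemmas smul_add = Modules.additive.add[OF add_smul]
lemmas smul_sum = Modules.additive.sum[OF add_smul]
lemmas pdiff_add = Modules.additive.add[OF add_pdiff]
lemmas pdiff_sum = Modules.additive.sum[OF add_pdiff]
lemmas pdiff_zero = Modules.additive.zero[OF add_pdiff]
lemmas xmul_add = Modules.additive.add[OF add_xmul]
lemmas xmul_sum = Modules.additive.sum[OF add_xmul]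
lemmas xmul_zero = Modules.additive.zero[OF add_xmul]
lemmas rmul_add = Modules.additive.add[OF add_rmul]
lemmas rmul_sum = Modules.additive.sum[OF add_rmul]
lemmas lmul_add = Modules.additive.add[OF add_lmul]
lemmas lmul_sum = Modules.additive.sum[OF add_lmul]

lemma smul_add_left: "smul (a + b) P = smul a P + smul b P"
  by (rule poly_mapping_eqI, simp add: lookup_add scaleR_add_left)
lemma smul_sum_left: "smul (\<Sum>x\<in>S. f x) P = (\<Sum>x\<in>S. smul (f x) P)"
  by (rule poly_mapping_eqI, simp add: lookup_sum scaleR_sum_left)
lemma smul_smul: "smul a (smul b P) = smul (a * b) P"
  by (rule poly_mapping_eqI, simp)
lemma smul_one: "smul 1 P = P"
  by (rule poly_mapping_eqI, simp)
lemma smul_0: "smul 0 P = 0"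
  by (rule poly_mapping_eqI, simp)
lemma smul_zero: "smul c 0 = 0"
  by (rule poly_mapping_eqI, simp)

lemma pdiff_smul: "pdiff i (smul c P) = smul c (pdiff i P)"
  by (rule poly_mapping_eqI, simp add: lk_pdiff)
lemma xmul_smul: "xmul i (smul c P) = smul c (xmul i P)"
  by (rule poly_mapping_eqI, simp add: lk_xmul)
lemma rmul_smul: "rmul (smul c P) M = smul c (rmul P M)"
  by (rule poly_mapping_eqI, simp add: mm_scale_l)
lemma lmul_smul: "lmul M (smul c P) = smul c (lmul M P)"
  by (rule poly_mapping_eqI, simp add: mm_scale_r)

lemma lmul_rmul: "lmul M (rmul P N) = rmul (lmul M P) N"
  by (rule poly_mapping_eqI, simp add: matrix_mul_assoc)
lemma lmul_xmul: "lmul M (xmul i P) = xmul i (lmul M P)"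
  by (rule poly_mapping_eqI, simp add: lk_xmul)
lemma lmul_pdiff: "lmul M (pdiff i P) = pdiff i (lmul M P)"
  by (rule poly_mapping_eqI, simp add: lk_pdiff mm_scale_r)
lemma rmul_pdiff: "rmul (pdiff i P) M = pdiff i (rmul P M)"
  by (rule poly_mapping_eqI, simp add: lk_pdiff mm_scale_l)

lemma pdiff_pdiff: "pdiff j (pdiff i P) = pdiff i (pdiff j P)"
proof (rule poly_mapping_eqI)
  fix x
  have e: "x + Poly_Mapping.single j (Suc 0) + Poly_Mapping.single i (Suc 0) = x + Poly_Mapping.single i (Suc 0) + Poly_Mapping.single j (Suc 0)"
    by (simp add: add_ac)
  show "lk (pdiff j (pdiff i P)) x = lk (pdiff i (pdiff j P)) x"
    by (cases "i = j") (auto simp: lk_pdiff lookup_add lookup_single when_def e mult.commute)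
qed

lemma pdiff_xmul: "pdiff j (xmul l P) = xmul l (pdiff j P) + (if j = l then P else 0)"
proof (rule poly_mapping_eqI)
  fix x
  let ?sj = "Poly_Mapping.single j (1::nat)" and ?sl = "Poly_Mapping.single l (1::nat)"
  show "lk (pdiff j (xmul l P)) x = lk (xmul l (pdiff j P) + (if j = l then P else 0)) x"
  proof (cases "j = l")
    case True
    show ?thesis
    proof (cases "lk x j = 0")
      case True
      then show ?thesis using \<open>j = l\<close> by (simp add: lk_pdiff lk_xmul lookup_add lookup_single)
    next
      case False
      have e1: "x - Poly_Mapping.single j (Suc 0) + Poly_Mapping.single j (Suc 0) = x"
        using False by (intro poly_mapping_eqI) (auto simp add: lookup_add lookup_minus lookup_single when_def)
      have e3: "x + Poly_Mapping.single j (Suc 0) - Poly_Mapping.single j (Suc 0) = x" by simp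
      have L: "lk (pdiff j (xmul l P)) x = real (lk x j + 1) *\<^sub>R lk P x"
        using \<open>j = l\<close> by (simp add: lk_pdiff lk_xmul lookup_add e3)
      have R: "lk (xmul l (pdiff j P)) x = real (lk x j) *\<^sub>R lk P x"
        using \<open>j = l\<close> False e1 by (simp add: lk_pdiff lk_xmul lookup_add lookup_minus)
      show ?thesis unfolding L lookup_add R using \<open>j = l\<close> by (simp add: scaleR_add_left algebra_simps)
    qed
  next
    case False
    have e: "x + Poly_Mapping.single j (Suc 0) - Poly_Mapping.single l (Suc 0) = x - Poly_Mapping.single l (Suc 0) + Poly_Mapping.single j (Suc 0)"
      using False by (intro poly_mapping_eqI) (simp add: lookup_add lookup_minus lookup_single when_def)
    show ?thesis using False
      by (simp add: lk_pdiff lk_xmul lookup_add lookup_minus lookup_single e)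
  qed
qed

lemma in_vars_iff: "in_vars l P \<longleftrightarrow> (\<forall>m j. lk P m \<noteq> 0 \<longrightarrow> lk m j \<noteq> 0 \<longrightarrow> j < l)"
  unfolding in_vars_def by (auto simp: in_keys_iff)

lemma pdiff_high:
  assumes "in_vars l P" "l \<le> i" shows "pdiff i P = 0"
proof (rule poly_mapping_eqI)
  fix x
  have "lk P (x + Poly_Mapping.single i 1) = 0"
  proof (rule ccontr)
    assume "lk P (x + Poly_Mapping.single i 1) \<noteq> 0"
    moreover have "lk (x + Poly_Mapping.single i 1) i \<noteq> 0" by (simp add: lookup_add)
    ultimately have "i < l" using assms(1) unfolding in_vars_iff by blast
    with assms(2) show False by simp
  qed
  then show "lk (pdiff i P) x = lk 0 x" by (simp add: lk_pdiff)
qed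

lemma in_vars_mono: "in_vars l P \<Longrightarrow> l \<le> l' \<Longrightarrow> in_vars l' P"
  unfolding in_vars_iff by (meson order_less_le_trans)

lemma in_vars_exists: "\<exists>l. in_vars l (P::'n::finite epoly)"
proof -
  have "finite (\<Union>m\<in>Poly_Mapping.keys P. Poly_Mapping.keys m)" by auto
  then obtain l where "\<forall>j\<in>(\<Union>m\<in>Poly_Mapping.keys P. Poly_Mapping.keys m). j < l"
    by (meson finite_nat_set_iff_bounded)
  then show ?thesis unfolding in_vars_def by blast
qed

lemma nvars: "in_vars l P \<Longrightarrow> in_vars (nvars P) P \<and> nvars P \<le> l"
  unfolding nvars_def by (metis LeastI Least_le)

lemma in_vars_add: "in_vars l P \<Longrightarrow> in_vars l Q \<Longrightarrow> in_vars l (P + Q)"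
  unfolding in_vars_iff lookup_add by (metis add_0 add.right_neutral)
lemma in_vars_zero: "in_vars l 0"
  by (auto simp: in_vars_iff)
lemma in_vars_sum: "(\<And>x. x \<in> S \<Longrightarrow> in_vars l (f x)) \<Longrightarrow> in_vars l (\<Sum>x\<in>S. f x)"
  by (induct S rule: infinite_finite_induct) (auto intro: in_vars_add in_vars_zero)
lemma in_vars_smul: "in_vars l P \<Longrightarrow> in_vars l (smul c P)"
  unfolding in_vars_iff lk_smul by (metis scaleR_zero_right)
lemma in_vars_rmul: "in_vars l P \<Longrightarrow> in_vars l (rmul P M)"
  unfolding in_vars_iff lk_rmul by (metis times0_left)
lemma in_vars_lmul: "in_vars l P \<Longrightarrow> in_vars l (lmul M P)"
  unfolding in_vars_iff lk_lmul by (metis times0_right)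
lemma in_vars_pdiff:
  assumes "in_vars l P" shows "in_vars l (pdiff i P)"
  unfolding in_vars_iff
proof (intro allI impI)
  fix m j assume h: "lk (pdiff i P) m \<noteq> 0" "lk m j \<noteq> 0"
  then have "lk P (m + Poly_Mapping.single i 1) \<noteq> 0" by (auto simp: lk_pdiff)
  moreover have "lk (m + Poly_Mapping.single i 1) j \<noteq> 0" using h(2) by (simp add: lookup_add)
  ultimately show "j < l" using assms unfolding in_vars_iff by blast
qed

lemma in_vars_xmul:
  assumes "in_vars l P" "j' < l" shows "in_vars l (xmul j' P)"
  unfolding in_vars_iff
proof (intro allI impI)
  fix m j assume h: "lk (xmul j' P) m \<noteq> 0" "lk m j \<noteq> 0"
  then have h2: "lk P (m - Poly_Mapping.single j' 1) \<noteq> 0" by (auto simp: lk_xmul split: if_splits)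
  show "j < l"
  proof (cases "j = j'")
    case True then show ?thesis using assms by simp
  next
    case False
    then have "lk (m - Poly_Mapping.single j' 1) j \<noteq> 0" using h(2) by (simp add: lookup_minus lookup_single)
    then show ?thesis using h2 assms unfolding in_vars_iff by blast
  qed
qed

lemma in_vars_one: "in_vars 0 one_poly"
  by (auto simp: in_vars_iff lk_one split: if_splits)


definition Psi2 :: "real^'n^'n \<Rightarrow> real^'n^'n \<Rightarrow> nat \<Rightarrow> 'n::finite epoly \<Rightarrow> 'n epoly" where
  "Psi2 A B N P = rmul P A + xmul 0 (rmul P B) + (\<Sum>i<N. xmul (Suc i) (pdiff i P))"

lemma Psi_eq: assumes "in_vars N P" shows "Psi A B P = Psi2 A B N P"
proof -
  from nvars[OF assms] have h: "in_vars (nvars P) P" "nvars P \<le> N" by auto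
  have "(\<Sum>i<N. xmul (Suc i) (pdiff i P)) = (\<Sum>i<nvars P. xmul (Suc i) (pdiff i P))"
    by (rule sum.mono_neutral_right) (use h in \<open>auto simp: pdiff_high xmul_zero\<close>)
  then show ?thesis unfolding Psi_def Psi2_def by simp
qed

lemma Psi2_in_vars: "in_vars N P \<Longrightarrow> in_vars (Suc N) (Psi2 A B N P)"
  unfolding Psi2_def
  by (intro in_vars_add in_vars_sum in_vars_xmul in_vars_rmul in_vars_pdiff)
     (auto intro: in_vars_mono)

lemma Pk_Suc: "Pk A B (Suc k) = Psi A B (Pk A B k)"
  by (simp add: Pk_def)

lemma Pk_0: "Pk A B 0 = one_poly"
  by (simp add: Pk_def)

lemma Pk_in_vars: "in_vars k (Pk A B k)"
  by (induct k) (simp_all add: Pk_0 in_vars_one Pk_Suc Psi_eq Psi2_in_vars)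

lemma Pk_Suc2: "Pk A B (Suc k) = Psi2 A B k (Pk A B k)"
  by (simp add: Pk_Suc Psi_eq[OF Pk_in_vars])

lemma sum_delta_Suc:
  assumes "in_vars N P"
  shows "(\<Sum>i<N. (if j = Suc i then pdiff i P else 0)) = (if j = 0 then 0 else pdiff (j - 1) P)"
proof (cases j)
  case 0 then show ?thesis by simp
next
  case (Suc j')
  have "(\<Sum>i<N. (if j = Suc i then pdiff i P else 0)) = (\<Sum>i<N. (if j' = i then pdiff i P else 0))"
    using Suc by simp
  also have "\<dots> = (if j' \<in> {..<N} then pdiff j' P else 0)"
    by simp
  also have "\<dots> = pdiff j' P" using pdiff_high[OF assms, of j'] by auto
  finally show ?thesis using Suc by simp
qed

lemma pdiff_Psi2:
  assumes "in_vars N P"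
  shows "pdiff j (Psi2 A B N P) = Psi2 A B N (pdiff j P) + (if j = 0 then rmul P B else pdiff (j - 1) P)"
proof -
  have "pdiff j (Psi2 A B N P) = rmul (pdiff j P) A + (xmul 0 (rmul (pdiff j P) B) + (if j = 0 then rmul P B else 0))
     + ((\<Sum>i<N. xmul (Suc i) (pdiff i (pdiff j P))) + (\<Sum>i<N. (if j = Suc i then pdiff i P else 0)))"
    unfolding Psi2_def pdiff_add pdiff_sum pdiff_xmul rmul_pdiff pdiff_pdiff[of j] sum.distrib
    by (simp add: rmul_pdiff pdiff_pdiff[of j])
  also have "\<dots> = Psi2 A B N (pdiff j P) + (if j = 0 then rmul P B else pdiff (j - 1) P)"
    unfolding sum_delta_Suc[OF assms] Psi2_def by (cases "j = 0") (simp_all add: add_ac)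
  finally show ?thesis .
qed

lemma add_Psi2: "Modules.additive (Psi2 A B N)"
  by unfold_locales (simp add: Psi2_def rmul_add xmul_add pdiff_add sum.distrib add_ac)

lemmas Psi2_sum = Modules.additive.sum[OF add_Psi2]

lemma Psi2_smul: "Psi2 A B N (smul c P) = smul c (Psi2 A B N P)"
  by (simp add: Psi2_def rmul_smul xmul_smul pdiff_smul smul_add smul_sum)

lemma Psi2_lmul: "lmul M (Psi2 A B N P) = Psi2 A B N (lmul M P)"
  by (simp add: Psi2_def lmul_add lmul_sum lmul_rmul lmul_xmul lmul_pdiff)

definition F :: "real^'n^'n \<Rightarrow> real^'n^'n \<Rightarrow> nat \<Rightarrow> nat \<Rightarrow> 'n::finite epoly" where
  "F A B i k = pdiff k (Pk A B (i + k))"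

lemma Qik_F: "Qik A B i (i + k) = F A B i k"
  by (simp add: Qik_def F_def)

lemma F_0: "F A B 0 k = 0"
  unfolding F_def by (rule pdiff_high[OF Pk_in_vars]) simp

lemma F_rec: "F A B (Suc i) (Suc k) = F A B (Suc i) k + Psi A B (F A B i (Suc k))"
proof -
  have iv: "in_vars (Suc i + k) (pdiff (Suc k) (Pk A B (Suc i + k)))"
    by (rule in_vars_pdiff[OF Pk_in_vars])
  have "F A B (Suc i) (Suc k) = pdiff (Suc k) (Psi2 A B (Suc i + k) (Pk A B (Suc i + k)))"
    by (simp add: F_def Pk_Suc2[symmetric])
  also have "\<dots> = Psi2 A B (Suc i + k) (pdiff (Suc k) (Pk A B (Suc i + k))) + pdiff k (Pk A B (Suc i + k))"
    by (simp add: pdiff_Psi2[OF Pk_in_vars])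
  also have "\<dots> = F A B (Suc i) k + Psi A B (F A B i (Suc k))"
    using Psi_eq[OF iv, of A B] by (simp add: F_def add_ac)
  finally show ?thesis .
qed

lemma F_sum: "F A B (Suc i) k = F A B (Suc i) 0 + (\<Sum>t<k. Psi A B (F A B i (Suc t)))"
  by (induct k) (simp_all add: F_rec add_ac)


lemma sum_ext_zero:
  fixes c :: "nat \<Rightarrow> real"
  assumes "\<forall>m>d. c m = 0" "d \<le> D"
  shows "(\<Sum>m\<le>d. c m * x ^ m) = (\<Sum>m\<le>D. c m * x ^ m)"
  by (rule sum.mono_neutral_left) (use assms in auto)

lemma telescope_pow:
  "real k ^ Suc j = real (Suc j) * (\<Sum>t<k. real t ^ j) + (\<Sum>l<j. real (Suc j choose l) * (\<Sum>t<k. real t ^ l))"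
proof -
  have d: "(real t + 1) ^ Suc j - real t ^ Suc j = real (Suc j) * real t ^ j + (\<Sum>l<j. real (Suc j choose l) * real t ^ l)" for t
  proof -
    have bn: "(real t + 1) ^ n = (\<Sum>l\<le>n. real (n choose l) * real t ^ l)" for n
      by (simp add: binomial_ring)
    have "(real t + 1) ^ Suc j = (\<Sum>l\<le>Suc j. real (Suc j choose l) * real t ^ l)"
      by (rule bn)
    also have "\<dots> = (\<Sum>l<j. real (Suc j choose l) * real t ^ l) + real (Suc j) * real t ^ j + real t ^ Suc j"
      by (simp add: lessThan_Suc_atMost[symmetric])
    finally show ?thesis by simp
  qed
  have "real k ^ Suc j = (\<Sum>t<k. (real (Suc t)) ^ Suc j - real t ^ Suc j)"
    by (subst sum_lessThan_telescope) simp
  also have "\<dots> = (\<Sum>t<k. real (Suc j) * real t ^ j + (\<Sum>l<j. real (Suc j choose l) * real t ^ l))"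
    using d by (simp add: add.commute)
  also have "\<dots> = real (Suc j) * (\<Sum>t<k. real t ^ j) + (\<Sum>l<j. real (Suc j choose l) * (\<Sum>t<k. real t ^ l))"
    by (simp add: sum.distrib sum_distrib_left sum.swap[of _ "{..<k}"])
  finally show ?thesis .
qed

lemma faul0: "\<exists>c::nat\<Rightarrow>real. (\<forall>m>Suc j. c m = 0) \<and> c (Suc j) = 1 / real (Suc j) \<and>
   (\<forall>k. (\<Sum>t<k. real t ^ j) = (\<Sum>m\<le>Suc j. c m * real k ^ m))"
proof (induct j rule: less_induct)
  case (less j)
  then obtain cc where cc: "\<And>l. l < j \<Longrightarrow> (\<forall>m>Suc l. cc l m = 0) \<and>
     (\<forall>k. (\<Sum>t<k. real t ^ l) = (\<Sum>m\<le>Suc l. cc l m * real k ^ m))"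
    by metis
  define c where "c m = (of_bool (m = Suc j) - (\<Sum>l<j. real (Suc j choose l) * cc l m)) / real (Suc j)" for m
  have a: "\<forall>m>Suc j. c m = 0"
    using cc by (auto simp: c_def)
  have b: "c (Suc j) = 1 / real (Suc j)"
    using cc by (auto simp: c_def)
  have e: "(\<Sum>t<k. real t ^ j) = (\<Sum>m\<le>Suc j. c m * real k ^ m)" for k
  proof -
    have inner: "(\<Sum>m\<le>Suc j. cc l m * real k ^ m) = (\<Sum>t<k. real t ^ l)" if "l < j" for l
      using cc[OF that] sum_ext_zero[of "Suc l" "cc l" "Suc j"] that by auto
    have "(\<Sum>m\<le>Suc j. c m * real k ^ m) =
       ((\<Sum>m\<le>Suc j. of_bool (m = Suc j) * real k ^ m) - (\<Sum>l<j. real (Suc j choose l) * (\<Sum>m\<le>Suc j. cc l m * real k ^ m))) / real (Suc j)"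
      unfolding c_def
      by (simp add: sum_divide_distrib[symmetric] left_diff_distrib sum_subtractf sum_distrib_left sum_distrib_right
          sum.swap[of _ "{..<j}"] mult.assoc distrib_left)
    also have "\<dots> = (real k ^ Suc j - (\<Sum>l<j. real (Suc j choose l) * (\<Sum>t<k. real t ^ l))) / real (Suc j)"
      by (simp del: atMost_Suc sum.atMost_Suc add: inner)
    also have "\<dots> = (\<Sum>t<k. real t ^ j)"
      unfolding telescope_pow by simp
    finally show ?thesis by simp
  qed
  show ?case using a b e by blast
qed

lemma faul: "\<exists>c::nat\<Rightarrow>real. (\<forall>m>Suc j. c m = 0) \<and> c (Suc j) = 1 / real (Suc j) \<and>
   (\<forall>k. (\<Sum>t<k. real (Suc t) ^ j) = (\<Sum>m\<le>Suc j. c m * real k ^ m))"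
proof -
  obtain c where c: "\<forall>m>Suc j. c m = 0" "c (Suc j) = 1 / real (Suc j)"
    "\<And>k. (\<Sum>t<k. real t ^ j) = (\<Sum>m\<le>Suc j. c m * real k ^ m)"
    using faul0[of j] by blast
  define c' where "c' m = c m + of_bool (m = j) - of_bool (m = 0) * 0 ^ j" for m
  have "(\<Sum>t<k. real (Suc t) ^ j) = (\<Sum>m\<le>Suc j. c' m * real k ^ m)" for k
  proof -
    have "(\<Sum>t<Suc k. real t ^ j) = 0 ^ j + (\<Sum>t<k. real (Suc t) ^ j)"
      by (subst sum.lessThan_Suc_shift) simp
    then have "(\<Sum>t<k. real (Suc t) ^ j) = (\<Sum>t<k. real t ^ j) + real k ^ j - 0 ^ j"
      by simp
    also have "\<dots> = (\<Sum>m\<le>Suc j. c' m * real k ^ m)"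
      unfolding c'_def c(3)
      by (cases j) (simp_all add: algebra_simps sum.distrib sum_subtractf)
    finally show ?thesis .
  qed
  moreover have "\<forall>m>Suc j. c' m = 0" using c(1) by (simp add: c'_def)
  moreover have "c' (Suc j) = 1 / real (Suc j)" using c(2) by (simp add: c'_def)
  ultimately show ?thesis by blast
qed


lemma step:
  assumes iv: "\<forall>j<i. in_vars i (R j)" and FR: "\<forall>k. F A B i k = (\<Sum>j<i. smul (real k ^ j) (R j))"
  shows "\<exists>H. (\<forall>l<Suc i. in_vars (Suc i) (H l)) \<and>
     (\<forall>k. F A B (Suc i) k = (\<Sum>l<Suc i. smul (real k ^ l) (H l))) \<and>
     (0 < i \<longrightarrow> H i = smul (1 / real i) (Psi2 A B i (R (i - 1))))"
proof -
  obtain cf where cf: "\<And>j. (\<forall>m>Suc j. cf j m = 0) \<and> cf j (Suc j) = 1 / real (Suc j) \<and>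
     (\<forall>k. (\<Sum>t<k. real (Suc t) ^ j) = (\<Sum>m\<le>Suc j. cf j m * real k ^ m))"
    using faul by metis
  define G where "G j = Psi2 A B i (R j)" for j
  define H where "H l = (if l = 0 then F A B (Suc i) 0 else 0) + (\<Sum>j<i. smul (cf j l) (G j))" for l
  have ivG: "in_vars (Suc i) (G j)" if "j < i" for j
    unfolding G_def using iv that by (simp add: Psi2_in_vars)
  have ivF0: "in_vars (Suc i) (F A B (Suc i) 0)"
    unfolding F_def by (simp add: in_vars_pdiff Pk_in_vars)
  have ivH: "\<forall>l<Suc i. in_vars (Suc i) (H l)"
    unfolding H_def using ivG ivF0
    by (auto intro!: in_vars_add in_vars_sum in_vars_smul in_vars_zero)
  have eq: "F A B (Suc i) k = (\<Sum>l<Suc i. smul (real k ^ l) (H l))" for k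
  proof -
    have ivFi: "in_vars i (F A B i t)" for t
      unfolding FR[rule_format] using iv by (auto intro!: in_vars_sum in_vars_smul)
    have ps: "Psi A B (F A B i (Suc t)) = (\<Sum>j<i. smul (real (Suc t) ^ j) (G j))" for t
      by (simp only: Psi_eq[OF ivFi]) (simp only: FR[rule_format] Psi2_sum Psi2_smul G_def)
    have poly: "(\<Sum>t<k. real (Suc t) ^ j) = (\<Sum>m<Suc i. cf j m * real k ^ m)" if "j < i" for j
    proof -
      have "(\<Sum>t<k. real (Suc t) ^ j) = (\<Sum>m\<le>Suc j. cf j m * real k ^ m)" using cf by blast
      also have "\<dots> = (\<Sum>m\<le>i. cf j m * real k ^ m)"
        by (rule sum_ext_zero) (use cf that in auto)
      finally show ?thesis by (simp add: lessThan_Suc_atMost)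
    qed
    have "(\<Sum>t<k. Psi A B (F A B i (Suc t))) = (\<Sum>j<i. smul (\<Sum>t<k. real (Suc t) ^ j) (G j))"
      unfolding ps smul_sum_left by (rule sum.swap)
    also have "\<dots> = (\<Sum>j<i. smul (\<Sum>m<Suc i. cf j m * real k ^ m) (G j))"
      by (rule sum.cong[OF refl]) (subst poly, simp_all)
    also have "\<dots> = (\<Sum>m<Suc i. smul (real k ^ m) (\<Sum>j<i. smul (cf j m) (G j)))"
      unfolding smul_sum_left smul_sum smul_smul by (subst sum.swap) (simp add: mult.commute)
    finally have s1: "(\<Sum>t<k. Psi A B (F A B i (Suc t))) = \<dots>" .
    have s0: "F A B (Suc i) 0 = (\<Sum>m<Suc i. smul (real k ^ m) (if m = 0 then F A B (Suc i) 0 else 0))"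
      by (simp add: smul_zero smul_one if_distrib cong: if_cong)
    show ?thesis
      unfolding F_sum[of A B i k] s1 H_def smul_add sum.distrib
      by (subst s0) (rule refl)
  qed
  have lead: "H i = smul (1 / real i) (Psi2 A B i (R (i - 1)))" if pos: "0 < i"
  proof -
    obtain i' where i': "i = Suc i'" using pos by (cases i) auto
    have z: "(\<Sum>j<i'. smul (cf j i) (G j)) = 0"
      by (rule sum.neutral) (use cf i' in \<open>auto simp: smul_0\<close>)
    have "H i = (\<Sum>j<Suc i'. smul (cf j i) (G j))"
      unfolding H_def using i' by simp
    also have "\<dots> = smul (cf i' i) (G i')" by (simp add: z)
    also have "\<dots> = smul (1 / real i) (Psi2 A B i (R (i - 1)))"
      using cf[of i'] i' by (simp add: G_def)
    finally show ?thesis .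
  qed
  show ?thesis using ivH eq lead by blast
qed


lemma rmul_one_lmul: "rmul one_poly M = lmul M one_poly"
  by (rule poly_mapping_eqI) (simp add: lk_one)

lemma F10:
  fixes A B :: "real^'n::finite^'n"
  shows "F A B (Suc 0) 0 = lmul B one_poly"
proof -
  have z: "pdiff 0 one_poly = (0::'n epoly)" by (rule pdiff_high[OF in_vars_one]) simp
  have "F A B (Suc 0) 0 = pdiff 0 (Psi2 A B 0 one_poly)"
    by (simp add: F_def Pk_Suc2 Pk_0)
  also have "\<dots> = rmul one_poly B"
    using pdiff_Psi2[OF in_vars_one, of 0 A B] z
    by (simp add: Modules.additive.zero[OF add_Psi2])
  finally show ?thesis by (simp add: rmul_one_lmul)
qed

lemma main: "\<exists>R. (\<forall>j<Suc i. in_vars (Suc i) (R j)) \<and>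
   (\<forall>k. F A B (Suc i) k = (\<Sum>j<Suc i. smul (real k ^ j) (R j))) \<and>
   R i = smul (1 / fact i) (lmul B (Pk A B i))"
proof (induct i)
  case 0
  obtain H where H: "\<forall>l<Suc 0. in_vars (Suc 0) (H l)"
     "\<forall>k. F A B (Suc 0) k = (\<Sum>l<Suc 0. smul (real k ^ l) (H l))"
    using step[of 0 "\<lambda>_. 0" A B] by (auto simp: F_0)
  have "H 0 = lmul B one_poly"
    using H(2) F10[of A B] by (auto simp: smul_one)
  then show ?case using H by (auto simp: smul_one Pk_0)
next
  case (Suc i)
  then obtain R where R: "\<forall>j<Suc i. in_vars (Suc i) (R j)"
    "\<forall>k. F A B (Suc i) k = (\<Sum>j<Suc i. smul (real k ^ j) (R j))"
    "R i = smul (1 / fact i) (lmul B (Pk A B i))" by blast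
  obtain H where H: "\<forall>l<Suc (Suc i). in_vars (Suc (Suc i)) (H l)"
     "\<forall>k. F A B (Suc (Suc i)) k = (\<Sum>l<Suc (Suc i). smul (real k ^ l) (H l))"
     "H (Suc i) = smul (1 / real (Suc i)) (Psi2 A B (Suc i) (R i))"
    using step[OF R(1,2)] by auto
  have piv: "in_vars (Suc i) (Pk A B i)" by (rule in_vars_mono[OF Pk_in_vars]) simp
  have "H (Suc i) = smul (1 / real (Suc i) * (1 / fact i)) (lmul B (Psi2 A B (Suc i) (Pk A B i)))"
    unfolding H(3) R(3) Psi2_smul Psi2_lmul smul_smul ..
  also have "\<dots> = smul (1 / fact (Suc i)) (lmul B (Pk A B (Suc i)))"
    by (simp add: Psi_eq[OF piv, symmetric] Pk_Suc)
  finally show ?case using H by blast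
qed

theorem lemma1:
  fixes A B :: "real^'n^'n" and i :: nat
  assumes "i \<ge> 1"
  shows "\<exists>R :: nat \<Rightarrow> 'n epoly.
           (\<forall>j<i. in_vars i (R j)) \<and>
           (\<forall>k::nat. Qik A B i (i + k) = (\<Sum>j<i. smul (real k ^ j) (R j))) \<and>
           R (i - 1) = smul (1 / fact (i - 1)) (lmul B (Pk A B (i - 1)))"
proof -
  obtain i' where i': "i = Suc i'" using assms by (cases i) auto
  show ?thesis using main[of i' A B] unfolding i' Qik_F by simp
qed

end
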